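(* Let $k$ be a real number. For every $s\in\mathbb{C}$ with $\mathrm{Re}(s)>\max(1,1+k)$, $$\sum_{n\geq1}\frac{\Omega(n)\beta_k(n)}{n^s}=\zeta(s)P(s-k)\bigl(P_\Omega(s)+1\bigr).$$
   Context: $\Omega(n)$ is the number of prime factors of $n$ counted with multiplicity; $\beta_k(n)=\sum_{p\mid n}p^k$ (sum over distinct primes dividing $n$). $\zeta(s)=\sum_{n\geq1}n^{-s}$ is the Riemann zeta function, $P(s)=\sum_p p^{-s}$ is the prime zeta function, and $P_\Omega(s)=\sum_p\frac{\Omega(p)}{p^s-1}=\sum_p\frac1{p^s-1}$, sums over all primes $p$. *)

theory Defs
  imports "HOL-Analysis.Analysis" "HOL-Computational_Algebra.Primes"
begin

definition bigOmega :: "nat \<Rightarrow> nat" where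
  "bigOmega n = size (prime_factorization n)"

definition beta :: "real \<Rightarrow> nat \<Rightarrow> real" where
  "beta k n = (\<Sum>p\<in>prime_factors n. real p powr k)"

definition zeta :: "complex \<Rightarrow> complex" where
  "zeta s = (\<Sum>\<^sub>\<infinity>n\<in>{1::nat..}. 1 / (of_nat n) powr s)"

definition prime_zeta :: "complex \<Rightarrow> complex" where
  "prime_zeta s = (\<Sum>\<^sub>\<infinity>p\<in>{p::nat. prime p}. 1 / (of_nat p) powr s)"

text \<open>P_Omega(s) = sum over primes of Omega(p)/(p^s - 1) = sum of 1/(p^s - 1).\<close>
definition prime_zeta_Omega :: "complex \<Rightarrow> complex" where
  "prime_zeta_Omega s = (\<Sum>\<^sub>\<infinity>p\<in>{p::nat. prime p}. of_nat (bigOmega p) / ((of_nat p) powr s - 1))"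

end

theory Submission imports Defs begin

definition X :: "complex \<Rightarrow> nat \<Rightarrow> complex" where "X s n = 1 / of_nat n powr s"

lemma X_mult: "X s (a*b) = X s a * X s b"
  unfolding X_def by (simp add: powr_times_real)

lemma X_power: "X s (p^n) = X s p ^ n"
proof (induction n)
  case 0 then show ?case by (simp add: X_def)
next
  case (Suc n)
  have "X s (p^Suc n) = X s (p * p^n)" by simp
  also have "\<dots> = X s p * X s (p^n)" by (rule X_mult)
  finally show ?case using Suc by simp
qed

lemma norm_X: "norm (X s n) = real n powr (- Re s)"
  unfolding X_def by (simp add: norm_divide norm_powr_real_powr powr_minus_divide)

lemma X_summable: assumes "Re s > 1" shows "X s summable_on A"
proof -
  have "summable (\<lambda>n. norm (X s n))"
    unfolding norm_X using assms by (subst summable_real_powr_iff) auto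
  then have "X s summable_on UNIV" by (rule norm_summable_imp_summable_on)
  then show ?thesis by (rule summable_on_subset_banach) auto
qed

lemma has_sum_product_complex:
  fixes f :: "'a \<Rightarrow> complex" and g :: "'b \<Rightarrow> complex"
  assumes f: "(f has_sum a) A" and g: "(g has_sum b) B"
  shows "((\<lambda>(x,y). f x * g y) has_sum (a*b)) (A \<times> B)"
proof -
  have fa: "(\<lambda>x. norm (f x)) summable_on A" using f summable_on_iff_abs_summable_on_complex has_sum_imp_summable by blast
  have ga: "(\<lambda>x. norm (g x)) summable_on B" using g summable_on_iff_abs_summable_on_complex has_sum_imp_summable by blast
  have "(\<lambda>z. norm ((\<lambda>(x,y). f x * g y) z)) summable_on Sigma A (\<lambda>_. B)"
  proof (rule iffD2[OF Infinite_Sum.abs_summable_on_Sigma_iff], intro conjI ballI)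
    fix x assume "x \<in> A"
    show "(\<lambda>y. norm (case (x, y) of (x, y) \<Rightarrow> f x * g y)) summable_on B"
      using summable_on_cmult_right[OF ga, of "norm (f x)"] by (simp add: norm_mult)
  next
    have eq: "infsum (\<lambda>y. norm (f x * g y)) B = norm (f x) * infsum (\<lambda>y. norm (g y)) B" for x
      unfolding norm_mult by (intro infsum_cmult_right) (use ga in auto)
    moreover have "(\<lambda>x. norm (norm (f x) * infsum (\<lambda>y. norm (g y)) B)) summable_on A"
    proof -
      have "(\<lambda>x. norm (f x) * infsum (\<lambda>y. norm (g y)) B) summable_on A"
        using fa by (rule summable_on_cmult_left)
      moreover have "infsum (\<lambda>y. norm (g y)) B \<ge> 0" by (simp add: infsum_nonneg)
      ultimately show "(\<lambda>x. norm (norm (f x) * infsum (\<lambda>y. norm (g y)) B)) summable_on A" by (simp add: abs_mult)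
    qed
    ultimately show "(\<lambda>x. norm (infsum (\<lambda>y. norm (case (x, y) of (x, y) \<Rightarrow> f x * g y)) B)) summable_on A"
      by (simp only: eq prod.case)
  qed
  then have sm: "(\<lambda>(x,y). f x * g y) summable_on A \<times> B"
    using summable_on_iff_abs_summable_on_complex by blast
  show ?thesis
  proof (rule has_sum_SigmaI[OF _ _ sm])
    fix x assume "x \<in> A"
    show "((\<lambda>y. case (x, y) of (x, y) \<Rightarrow> f x * g y) has_sum f x * b) B"
      using has_sum_cmult_right[OF g] by simp
  next
    show "((\<lambda>x. f x * b) has_sum a * b) A" using has_sum_cmult_left[OF f] .
  qed
qed

lemma summable_product_complex:
  fixes f :: "'a \<Rightarrow> complex" and g :: "'b \<Rightarrow> complex"
  assumes f: "f summable_on A" and g: "g summable_on B"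
  shows "(\<lambda>(x,y). f x * g y) summable_on (A \<times> B)"
  using has_sum_product_complex[OF has_sum_infsum[OF f] has_sum_infsum[OF g]] has_sum_imp_summable by blast


lemma geom_has_sum:
  fixes c :: complex assumes "norm c < 1"
  shows "((\<lambda>a. c ^ Suc a) has_sum (c / (1 - c))) UNIV"
proof (rule norm_summable_imp_has_sum)
  have "summable (\<lambda>a. norm c * norm c ^ a)"
    using assms by (intro summable_mult summable_geometric) auto
  then show "summable (\<lambda>a. norm (c ^ Suc a))" by (simp add: norm_power norm_mult)
  have "(\<lambda>a. c * c ^ a) sums (c * (1 / (1 - c)))"
    by (intro sums_mult geometric_sums) (use assms in auto)
  then show "(\<lambda>a. c ^ Suc a) sums (c / (1 - c))" by simp
qed

lemma norm_X_prime_less: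
  assumes "Re s > 1" "prime (q::nat)"
  shows "norm (X s q) < 1"
proof -
  have "real q > 1" using assms prime_gt_1_nat by auto
  then show ?thesis unfolding norm_X using assms by (intro powr_less_one) auto
qed

lemma PA_eq:
  assumes "n > 0"
  shows "{(p,a). prime (p::nat) \<and> p ^ Suc a dvd n} = Sigma (prime_factors n) (\<lambda>p. {..<multiplicity p n})"
proof -
  have "(prime p \<and> p ^ Suc a dvd n) \<longleftrightarrow> (p \<in> prime_factors n \<and> a < multiplicity p n)" for p a
  proof
    assume h: "prime p \<and> p ^ Suc a dvd n"
    then have "p \<in> prime_factors n" using assms
      by (metis dvd_power dvd_trans in_prime_factors_iff not_gr0 zero_less_Suc)
    moreover have "a < multiplicity p n" using h power_dvd_iff_le_multiplicity[where p=p and n="Suc a" and x=n] assms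
      using prime_gt_1_nat[of p] by (auto simp: Suc_le_eq simp del: power_Suc)
    ultimately show "p \<in> prime_factors n \<and> a < multiplicity p n" by blast
  next
    assume "p \<in> prime_factors n \<and> a < multiplicity p n"
    then show "prime p \<and> p ^ Suc a dvd n"
      using power_dvd_iff_le_multiplicity[where p=p and n="Suc a" and x=n] assms
      using prime_gt_1_nat[of p] by (auto simp: in_prime_factors_iff Suc_le_eq simp del: power_Suc)
  qed
  then show ?thesis by auto
qed

lemma PA_finite: "n > 0 \<Longrightarrow> finite {(p,a). prime (p::nat) \<and> p ^ Suc a dvd n}"
  by (subst PA_eq) auto

lemma omega_card:
  assumes "n > 0"
  shows "card {(p,a). prime (p::nat) \<and> p ^ Suc a dvd n} = bigOmega n"
proof -
  note eq = PA_eq[OF assms]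
  have "card (Sigma (prime_factors n) (\<lambda>p. {..<multiplicity p n})) = (\<Sum>p\<in>prime_factors n. multiplicity p n)"
    by (subst card_SigmaI) auto
  also have "\<dots> = (\<Sum>p\<in>prime_factors n. count (prime_factorization n) p)"
    by (intro sum.cong) (auto simp: count_prime_factorization)
  also have "\<dots> = bigOmega n"
    unfolding bigOmega_def by (simp add: size_multiset_overloaded_eq)
  finally show ?thesis using eq by simp
qed

lemma f_decomp:
  assumes "n > 0"
  shows "of_nat (bigOmega n) * of_real (beta k n) / of_nat n powr s =
    (\<Sum>(q,(p,a)) \<in> {q. prime (q::nat) \<and> q dvd n} \<times> {(p,a). prime (p::nat) \<and> p ^ Suc a dvd n}.
        complex_of_real (real q powr k) * X s n)"
proof -
  have fin1: "finite {q. prime (q::nat) \<and> q dvd n}"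
    by (rule finite_subset[of _ "{..n}"]) (use assms in \<open>auto dest: dvd_imp_le\<close>)
  have fin2: "finite {(p,a). prime (p::nat) \<and> p ^ Suc a dvd n}"
    using PA_finite[OF assms] .
  define Q where "Q = {q. prime (q::nat) \<and> q dvd n}"
  define PA where "PA = {(p,a). prime (p::nat) \<and> p ^ Suc a dvd n}"
  have pf: "prime_factors n = Q" unfolding Q_def using assms by (auto simp: in_prime_factors_iff)
  have "(\<Sum>(q,(p,a)) \<in> Q \<times> PA. complex_of_real (real q powr k) * X s n)
      = (\<Sum>(q,pa) \<in> Q \<times> PA. complex_of_real (real q powr k) * X s n)"
    by (intro sum.cong) auto
  also have "\<dots> = (\<Sum>q\<in>Q. \<Sum>pa\<in>PA. complex_of_real (real q powr k) * X s n)"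
    by (rule sum.cartesian_product[symmetric])
  also have "\<dots> = (\<Sum>q\<in>Q. of_nat (card PA) * (complex_of_real (real q powr k) * X s n))"
    by simp
  also have "\<dots> = of_nat (card PA) * X s n * (\<Sum>q\<in>Q. complex_of_real (real q powr k))"
    by (simp add: sum_distrib_left mult_ac)
  also have "\<dots> = of_nat (bigOmega n) * of_real (beta k n) / of_nat n powr s"
    unfolding PA_def omega_card[OF assms] beta_def pf X_def by simp
  finally show ?thesis unfolding Q_def PA_def by simp
qed


lemma X_nz: "q > 0 \<Longrightarrow> of_nat q powr (s::complex) \<noteq> 0"
  by (simp add: powr_def)

lemma u_eq:
  assumes "q > 0"
  shows "X (s - of_real k) q = of_real (real q powr k) * X s q"
proof -
  have "(of_nat q :: complex) powr (of_real k) = of_real (real q powr k)"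
    using powr_of_real[of "real q" k] by simp
  then show ?thesis unfolding X_def using X_nz[OF assms, of s]
    by (simp add: powr_diff)
qed

lemma zeta_has_sum: "Re s > 1 \<Longrightarrow> (X s has_sum zeta s) {1..}"
proof -
  assume "Re s > 1"
  have "zeta s = infsum (X s) {1..}" unfolding zeta_def X_def by simp
  then show ?thesis using has_sum_infsum[OF X_summable[OF \<open>Re s > 1\<close>]] by simp
qed

lemma pzeta_has_sum: "Re s > 1 \<Longrightarrow> (X s has_sum prime_zeta s) {p. prime p}"
proof -
  assume "Re s > 1"
  have "prime_zeta s = infsum (X s) {p. prime p}" unfolding prime_zeta_def X_def by simp
  then show ?thesis using has_sum_infsum[OF X_summable[OF \<open>Re s > 1\<close>]] by simp
qed

lemma bigOmega_prime: "prime p \<Longrightarrow> bigOmega p = 1"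
  unfolding bigOmega_def by (simp add: prime_factorization_prime)

lemma pzetaOmega_has_sum:
  assumes "Re s > 1"
  shows "((\<lambda>(p,a). X s p ^ Suc a) has_sum prime_zeta_Omega s) ({p. prime p} \<times> UNIV)"
proof -
  define Q where "Q = {p::nat. prime p}"
  have inj: "inj_on (\<lambda>(p,a). p ^ Suc a) (Q \<times> UNIV)"
    unfolding Q_def by (auto intro!: inj_onI simp: prime_power_inj'' simp del: power_Suc)
  have "X s summable_on ((\<lambda>(p,a). p ^ Suc a) ` (Q \<times> UNIV))" by (rule X_summable[OF assms])
  then have "(X s \<circ> (\<lambda>(p,a). p ^ Suc a)) summable_on (Q \<times> UNIV)"
    using summable_on_reindex[OF inj] by blast
  moreover have "(X s \<circ> (\<lambda>(p,a). p ^ Suc a)) = (\<lambda>(p,a). X s p ^ Suc a)"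
    by (auto simp: X_power simp del: power_Suc)
  ultimately have sm: "(\<lambda>(p,a). X s p ^ Suc a) summable_on (Q \<times> UNIV)" by simp
  have inner: "((\<lambda>a. X s p ^ Suc a) has_sum (of_nat (bigOmega p) / (of_nat p powr s - 1))) UNIV"
    if "p \<in> Q" for p
  proof -
    have pr: "prime p" using that Q_def by simp
    have "((\<lambda>a. X s p ^ Suc a) has_sum (X s p / (1 - X s p))) UNIV"
      by (rule geom_has_sum[OF norm_X_prime_less[OF assms pr]])
    moreover have "X s p / (1 - X s p) = of_nat (bigOmega p) / (of_nat p powr s - 1)"
    proof -
      have p0: "p > 0" using pr prime_gt_0_nat by blast
      have n1: "of_nat p powr s \<noteq> 1"
        using norm_X_prime_less[OF assms pr] unfolding X_def by auto
      show ?thesis using X_nz[OF p0, of s] n1 unfolding bigOmega_prime[OF pr] X_def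
        by (simp add: field_simps)
    qed
    ultimately show ?thesis by simp
  qed
  have "((\<lambda>p. of_nat (bigOmega p) / (of_nat p powr s - 1)) has_sum infsum (\<lambda>(p,a). X s p ^ Suc a) (Q \<times> UNIV)) Q"
    by (rule has_sum_Sigma'[OF has_sum_infsum[OF sm]]) (use inner in auto)
  then have "prime_zeta_Omega s = infsum (\<lambda>(p,a). X s p ^ Suc a) (Q \<times> UNIV)"
    unfolding prime_zeta_Omega_def Q_def by (rule infsumI)
  then show ?thesis using has_sum_infsum[OF sm] unfolding Q_def by simp
qed


lemma e_has_sum:
  assumes s1: "Re s > 1" and sk: "Re (s - of_real k) > 1"
  shows "((\<lambda>(q,a). of_real (real q powr k) * (1 - X s q) * X s q ^ Suc a) has_sum prime_zeta (s - of_real k))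
           ({q. prime q} \<times> UNIV)"
proof -
  define Q where "Q = {p::nat. prime p}"
  define r where "r = (2::real) powr (- Re s)"
  define e where "e = (\<lambda>(q,a). of_real (real q powr k) * (1 - X s q) * X s q ^ Suc a)"
  define G where "G = (\<lambda>(q::nat,a::nat). (2 * X (s - of_real k) q) * of_real r ^ a)"
  have r0: "r \<ge> 0" "r < 1" unfolding r_def using s1 by (auto intro: powr_less_one)
  have "summable (\<lambda>a. norm (complex_of_real r ^ a))"
    using r0 by (simp add: norm_power summable_geometric)
  then have g1: "(\<lambda>a. complex_of_real r ^ a) summable_on UNIV"
    by (rule norm_summable_imp_summable_on)
  have g2: "(\<lambda>q. 2 * X (s - of_real k) q) summable_on Q"
    by (intro summable_on_cmult_right X_summable sk)
  have "G summable_on Q \<times> UNIV" unfolding G_def by (rule summable_product_complex[OF g2 g1])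
  then have Gabs: "(\<lambda>x. norm (G x)) summable_on Q \<times> UNIV"
    using summable_on_iff_abs_summable_on_complex by blast
  have bound: "norm (e x) \<le> norm (G x)" if xQ: "x \<in> Q \<times> UNIV" for x
  proof -
    obtain q a where x: "x = (q,a)" and pr: "prime q" using xQ unfolding Q_def by (cases x) auto
    have q0: "q > 0" using pr prime_gt_0_nat by blast
    have q1: "real q \<ge> 2" using pr prime_ge_2_nat by auto
    define c where "c = X s q"
    have nc: "norm c \<le> r" unfolding c_def norm_X r_def
      using q1 s1 by (intro powr_mono2') auto
    have nc1: "norm (1 - c) \<le> 2" using norm_triangle_ineq4[of 1 c] nc r0 by simp
    have "norm (e x) = real q powr k * norm (1 - c) * norm c * norm c ^ a"
      unfolding e_def x c_def by (simp add: norm_mult norm_power)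
    also have "\<dots> \<le> real q powr k * 2 * norm c * r ^ a"
      using nc nc1 by (intro mult_mono power_mono) auto
    also have "\<dots> = norm (G x)"
      unfolding G_def x c_def using r0 by (simp add: u_eq[OF q0] norm_mult norm_power)
    finally show ?thesis .
  qed
  have "(\<lambda>x. norm (e x)) summable_on Q \<times> UNIV"
    by (rule Infinite_Sum.abs_summable_on_comparison_test[OF Gabs]) (use bound in auto)
  then have sm: "e summable_on Q \<times> UNIV"
    using summable_on_iff_abs_summable_on_complex by blast
  have inner: "((\<lambda>a. e (q,a)) has_sum X (s - of_real k) q) UNIV" if "q \<in> Q" for q
  proof -
    have pr: "prime q" using that Q_def by simp
    have q0: "q > 0" using pr prime_gt_0_nat by blast
    have c1: "X s q \<noteq> 1" using norm_X_prime_less[OF s1 pr] by auto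
    have "((\<lambda>a. (of_real (real q powr k) * (1 - X s q)) * X s q ^ Suc a) has_sum
           (of_real (real q powr k) * (1 - X s q)) * (X s q / (1 - X s q))) UNIV"
      by (intro has_sum_cmult_right geom_has_sum norm_X_prime_less[OF s1 pr])
    moreover have "(of_real (real q powr k) * (1 - X s q)) * (X s q / (1 - X s q)) = X (s - of_real k) q"
      using c1 unfolding u_eq[OF q0] by (simp add: field_simps)
    ultimately show ?thesis unfolding e_def by simp
  qed
  have "(e has_sum prime_zeta (s - of_real k)) (Q \<times> UNIV)"
    by (rule has_sum_SigmaI[OF _ _ sm]) (use inner pzeta_has_sum[OF sk] Q_def in auto)
  then show ?thesis unfolding e_def Q_def .
qed


lemma lcm_distinct_primes:
  assumes "prime (q::nat)" "prime p" "p \<noteq> q"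
  shows "lcm q (p ^ Suc a) = q * p ^ Suc a"
proof -
  have "\<not> p dvd q" using assms primes_dvd_imp_eq by blast
  then have "coprime q (p ^ Suc a)" using assms prime_imp_power_coprime_nat by blast
  then show ?thesis by (simp add: lcm_nat_def coprime_iff_gcd_eq_1)
qed

lemma key:
  assumes q: "prime (q::nat)" and p: "prime p"
  shows "of_real (real q powr k) * X s (lcm q (p ^ Suc a) * m) =
    X (s - of_real k) q * (X s p ^ Suc a * X s m) +
    (if p = q then of_real (real q powr k) * (1 - X s q) * X s q ^ Suc a * X s m else 0)"
proof -
  have q0: "q > 0" using q prime_gt_0_nat by blast
  show ?thesis
  proof (cases "p = q")
    case True
    have "lcm q (p ^ Suc a) = p ^ Suc a" using True by (intro lcm_proj2_if_dvd_nat) auto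
    then show ?thesis using True unfolding u_eq[OF q0]
      by (simp add: X_mult X_power algebra_simps del: power_Suc)
  next
    case False
    then show ?thesis unfolding u_eq[OF q0] lcm_distinct_primes[OF q p False]
      by (simp add: X_mult X_power algebra_simps del: power_Suc)
  qed
qed


theorem theorem4p2:
  fixes k :: real and s :: complex
  assumes "Re s > max 1 (1 + k)"
  shows "((\<lambda>n::nat. of_nat (bigOmega n) * of_real (beta k n) / (of_nat n) powr s) has_sum
           (zeta s * prime_zeta (s - of_real k) * (prime_zeta_Omega s + 1))) {1..}"
proof -
  have s1: "Re s > 1" and sk: "Re (s - of_real k) > 1" using assms by auto
  define Q where "Q = {p::nat. prime p}"
  define M where "M = {1::nat..}"
  define F where "F = Q \<times> ((Q \<times> (UNIV::nat set)) \<times> M)"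
  define h0 where "h0 = (\<lambda>(q,((p,a),m)). X (s - of_real k) q * (X s p ^ Suc a * X s m))"
  define e where "e = (\<lambda>(q,a). of_real (real q powr k) * (1 - X s q) * X s q ^ Suc a)"
  define d where "d = (\<lambda>(q::nat,((p::nat,a::nat),m::nat)). if p = q then e (q,a) * X s m else 0)"
  define h where "h = (\<lambda>(q::nat,((p::nat,a::nat),m::nat)). of_real (real q powr k) * X s (lcm q (p ^ Suc a) * m))"
  define A where "A = prime_zeta (s - of_real k) * (prime_zeta_Omega s * zeta s)"
  define D where "D = prime_zeta (s - of_real k) * zeta s"
  have H0: "(h0 has_sum A) F"
  proof -
    have 1: "((\<lambda>(x,y). (\<lambda>(p,a). X s p ^ Suc a) x * X s y) has_sum (prime_zeta_Omega s * zeta s))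
              ((Q \<times> UNIV) \<times> M)"
      unfolding Q_def M_def by (rule has_sum_product_complex[OF pzetaOmega_has_sum[OF s1] zeta_has_sum[OF s1]])
    have 2: "((\<lambda>(x,y). X (s - of_real k) x * (\<lambda>(x,y). (\<lambda>(p,a). X s p ^ Suc a) x * X s y) y) has_sum A) F"
      unfolding F_def A_def
      by (rule has_sum_product_complex[OF pzeta_has_sum[OF sk, folded Q_def] 1])
    show ?thesis using 2 unfolding h0_def by (rule has_sum_cong[THEN iffD1, rotated]) auto
  qed
  have HD: "(d has_sum D) F"
  proof -
    define S where "S = (Q \<times> (UNIV::nat set)) \<times> M"
    define j where "j = (\<lambda>((q::nat,a::nat),m::nat). (q,((q,a),m)))"
    have 1: "((\<lambda>(x,y). e x * X s y) has_sum D) S"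
      unfolding S_def D_def Q_def M_def e_def
      by (rule has_sum_product_complex[OF e_has_sum[OF s1 sk] zeta_has_sum[OF s1]])
    have inj: "inj_on j S" unfolding j_def by (auto intro!: inj_onI)
    have "((d \<circ> j) has_sum D) S"
      using 1 by (rule has_sum_cong[THEN iffD1, rotated]) (auto simp: d_def j_def)
    then have "(d has_sum D) (j ` S)" using has_sum_reindex[OF inj] by blast
    moreover have "j ` S \<subseteq> F" unfolding j_def S_def F_def by auto
    moreover have "x \<in> F - j ` S \<Longrightarrow> d x = 0" for x
    proof -
      assume x: "x \<in> F - j ` S"
      obtain q p a m where xe: "x = (q,((p,a),m))" by (cases x) auto
      have "p \<noteq> q"
      proof
        assume "p = q"
        then have "x = j ((q,a),m)" unfolding xe j_def by simp
        moreover have "((q,a),m) \<in> S" using x unfolding xe S_def F_def by auto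
        ultimately show False using x by blast
      qed
      then show "d x = 0" unfolding xe d_def by simp
    qed
    ultimately show ?thesis
      by (subst has_sum_cong_neutral[where T="j ` S"]) auto
  qed
  have HH: "(h has_sum (A + D)) F"
  proof -
    have "((\<lambda>x. h0 x + d x) has_sum (A + D)) F" by (rule has_sum_add[OF H0 HD])
    then show ?thesis
      by (rule has_sum_cong[THEN iffD1, rotated])
         (auto simp: F_def Q_def h_def h0_def d_def e_def key simp del: power_Suc)
  qed
  define Dn where "Dn = (\<lambda>n::nat. {q. prime (q::nat) \<and> q dvd n} \<times> {(p,a). prime (p::nat) \<and> p ^ Suc a dvd n})"
  define T where "T = Sigma {1::nat..} Dn"
  define gS where "gS = (\<lambda>(n::nat,(q::nat,(p::nat,a::nat))). complex_of_real (real q powr k) * X s n)"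
  define jj where "jj = (\<lambda>(q::nat,((p::nat,a::nat),m::nat)). (lcm q (p ^ Suc a) * m, (q,(p,a))))"
  define ii where "ii = (\<lambda>(n::nat,(q::nat,(p::nat,a::nat))). (q,((p,a), n div lcm q (p ^ Suc a))))"
  have HT: "(gS has_sum (A + D)) T"
  proof -
    have "(h has_sum (A + D)) F = (gS has_sum (A + D)) T"
    proof (rule has_sum_reindex_bij_witness[where i=ii and j=jj])
      fix x assume "x \<in> F"
      then obtain q p a m where xe: "x = (q,((p,a),m))" and pr: "prime q" "prime p" "m \<ge> 1"
        unfolding F_def Q_def M_def by auto
      have L0: "lcm q (p ^ Suc a) > 0" using pr by (simp add: lcm_pos_nat prime_gt_0_nat)
      show "ii (jj x) = x" unfolding xe ii_def jj_def using L0 by simp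
      have d1: "q dvd lcm q (p ^ Suc a) * m" by (intro dvd_mult2 dvd_lcm1)
      have d2: "p ^ Suc a dvd lcm q (p ^ Suc a) * m" by (intro dvd_mult2 dvd_lcm2)
      have "lcm q (p ^ Suc a) * m \<ge> 1" using L0 pr(3) by (simp add: Suc_le_eq)
      then show "jj x \<in> T" unfolding xe jj_def T_def Dn_def using pr d1 d2 by simp
      show "gS (jj x) = h x" unfolding xe jj_def gS_def h_def by simp
    next
      fix y assume "y \<in> T"
      then obtain n q p a where ye: "y = (n,(q,(p,a)))" and n1: "n \<ge> 1" and pr: "prime q" "prime p"
          and dv: "q dvd n" "p ^ Suc a dvd n"
        unfolding T_def Dn_def by auto
      have Ld: "lcm q (p ^ Suc a) dvd n" using dv by (rule lcm_least)
      have L0: "lcm q (p ^ Suc a) > 0" using pr by (simp add: lcm_pos_nat prime_gt_0_nat)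
      show "jj (ii y) = y" unfolding ye ii_def jj_def using Ld by simp
      have "n div lcm q (p ^ Suc a) \<ge> 1"
      proof -
        obtain c where c: "n = lcm q (p ^ Suc a) * c" using Ld by (elim dvdE)
        then have "n div lcm q (p ^ Suc a) = c" using L0 by simp
        moreover have "c \<noteq> 0" using c n1 by (intro notI) simp
        ultimately show ?thesis by simp
      qed
      then show "ii y \<in> F" unfolding ye ii_def F_def Q_def M_def using pr by auto
    qed simp
    then show ?thesis using HH by simp
  qed
  have inner: "((\<lambda>y. gS (n, y)) has_sum
      (of_nat (bigOmega n) * of_real (beta k n) / (of_nat n) powr s)) (Dn n)" if "n \<in> {1..}" for n
  proof -
    have n0: "n > 0" using that by auto
    have fin1: "finite {q. prime (q::nat) \<and> q dvd n}"
      by (rule finite_subset[of _ "{..n}"]) (use n0 in \<open>auto dest: dvd_imp_le\<close>)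
    have fin: "finite (Dn n)" unfolding Dn_def
      using fin1 PA_finite[OF n0] by (rule finite_cartesian_product)
    show ?thesis
      by (rule has_sum_finiteI[OF fin]) (simp add: f_decomp[OF n0] Dn_def gS_def case_prod_beta')
  qed
  have "((\<lambda>n. of_nat (bigOmega n) * of_real (beta k n) / (of_nat n) powr s) has_sum (A + D)) {1..}"
    using has_sum_Sigma'[OF HT[unfolded T_def] inner] by simp
  moreover have "A + D = zeta s * prime_zeta (s - of_real k) * (prime_zeta_Omega s + 1)"
    unfolding A_def D_def by (simp add: algebra_simps)
  ultimately show ?thesis by simp
qed

end
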